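(* Let $n$ be a positive integer, $i,k\in\{1,\ldots,n\}$ with $k<n$, and let $H\sim\text{Hyp}(n,i,k)$. Then \[ \mathbb{E}(H\mid H\ge \mathbb{E}(H)) \,\le\, \lceil\mathbb{E}(H)\rceil + \sqrt{\text{Var}(H) \cdot \frac{n-1}{n-k} + 1}. \]
   Context: $\text{Hyp}(n,i,k)$ denotes the hypergeometric distribution: the number of black marbles in a sample without replacement of size $k$ from an urn with $i$ black and $n-i$ white marbles, i.e. $\mathbb{P}(H=j)=\binom{i}{j}\binom{n-i}{k-j}/\binom{n}{k}$. One has $\mathbb{E}(H)=ik/n$ and $\text{Var}(H)=k\cdot\frac{i}{n}\cdot\frac{n-i}{n}\cdot\frac{n-k}{n-1}$. For real $x$, $\lceil x\rceil=\min\{s\in\mathbb{Z}: s\ge x\}$. *)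

theory Defs
  imports "HOL-Probability.Probability"
begin

text \<open>Hyp(n,i,k): number of black marbles in a uniformly random k-subset (sample without
replacement) of an urn {0..<n} whose black marbles are {0..<i}.\<close>
definition hyp_pmf :: "nat \<Rightarrow> nat \<Rightarrow> nat \<Rightarrow> nat pmf" where
  "hyp_pmf n i k =
     map_pmf (\<lambda>S. card (S \<inter> {0..<i})) (pmf_of_set {S. S \<subseteq> {0..<n} \<and> card S = k})"

definition hyp_mean :: "nat \<Rightarrow> nat \<Rightarrow> nat \<Rightarrow> real" where
  "hyp_mean n i k = measure_pmf.expectation (hyp_pmf n i k) real"

definition hyp_var :: "nat \<Rightarrow> nat \<Rightarrow> nat \<Rightarrow> real" where
  "hyp_var n i k = measure_pmf.variance (hyp_pmf n i k) real"

definition hyp_upper_cond_mean :: "nat \<Rightarrow> nat \<Rightarrow> nat \<Rightarrow> real" where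
  "hyp_upper_cond_mean n i k =
     measure_pmf.expectation
       (cond_pmf (hyp_pmf n i k) {j. real j \<ge> hyp_mean n i k}) real"

end

theory Submission
  imports Defs
begin

lemma count_subsets:
  fixes U B :: "nat set"
  assumes fin: "finite U" and BU: "B \<subseteq> U" and jk: "j \<le> k"
  shows "card {S. S \<subseteq> U \<and> card S = k \<and> card (S \<inter> B) = j}
         = (card B choose j) * (card (U - B) choose (k - j))"
proof -
  let ?X = "{T. T \<subseteq> B \<and> card T = j}"
  let ?Y = "{R. R \<subseteq> U - B \<and> card R = k - j}"
  have finB: "finite B" using fin BU finite_subset by blast
  have finUB: "finite (U - B)" using fin by blast
  have eq: "{S. S \<subseteq> U \<and> card S = k \<and> card (S \<inter> B) = j} = (\<lambda>(T,R). T \<union> R) ` (?X \<times> ?Y)"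
  proof (intro equalityI subsetI)
    fix S assume "S \<in> {S. S \<subseteq> U \<and> card S = k \<and> card (S \<inter> B) = j}"
    hence S: "S \<subseteq> U" "card S = k" "card (S \<inter> B) = j" by auto
    have finS: "finite S" using S(1) fin finite_subset by blast
    have "card S = card ((S \<inter> B) \<union> (S - B))" by (metis Int_Diff_Un)
    also have "\<dots> = card (S \<inter> B) + card (S - B)"
      using finS by (intro card_Un_disjoint) auto
    finally have "card S = card (S \<inter> B) + card (S - B)" .
    hence "card (S - B) = k - j" using S by simp
    moreover have "S = (S \<inter> B) \<union> (S - B)" by blast
    ultimately show "S \<in> (\<lambda>(T,R). T \<union> R) ` (?X \<times> ?Y)" using S
      by (intro image_eqI[where x="(S \<inter> B, S - B)"]) auto
  next
    fix S assume "S \<in> (\<lambda>(T,R). T \<union> R) ` (?X \<times> ?Y)"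
    then obtain T R where TR: "T \<subseteq> B" "card T = j" "R \<subseteq> U - B" "card R = k - j" "S = T \<union> R" by auto
    have fT: "finite T" using TR finB finite_subset by blast
    have fR: "finite R" using TR finUB finite_subset by blast
    have "T \<inter> R = {}" using TR by blast
    hence "card S = j + (k - j)" using TR fT fR card_Un_disjoint by metis
    moreover have "S \<inter> B = T" using TR by blast
    ultimately show "S \<in> {S. S \<subseteq> U \<and> card S = k \<and> card (S \<inter> B) = j}" using TR BU jk by auto
  qed
  have inj: "inj_on (\<lambda>(T,R). T \<union> R) (?X \<times> ?Y)"
  proof (rule inj_onI, clarify)
    fix T R T' R' assume a: "T \<subseteq> B" "R \<subseteq> U - B" "T' \<subseteq> B" "R' \<subseteq> U - B" "T \<union> R = T' \<union> R'"
    have "T = (T \<union> R) \<inter> B" "T' = (T' \<union> R') \<inter> B" "R = (T \<union> R) - B" "R' = (T' \<union> R') - B"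
      using a by blast+
    thus "T = T' \<and> R = R'" using a(5) by metis
  qed
  show ?thesis
    unfolding eq card_image[OF inj] card_cartesian_product
    using n_subsets[OF finB] n_subsets[OF finUB] by simp
qed


lemma stein_sum:
  fixes A B g :: "nat \<Rightarrow> real"
  assumes "\<forall>j<k. A j = B (Suc j)" "A k = 0" "B 0 = 0"
  shows "(\<Sum>j\<le>k. A j * g (Suc j)) = (\<Sum>j\<le>k. B j * g j)"
proof -
  have "(\<Sum>j\<le>k. A j * g (Suc j)) = (\<Sum>j<Suc k. A j * g (Suc j))"
    by (simp add: lessThan_Suc_atMost)
  also have "\<dots> = (\<Sum>j<k. A j * g (Suc j))" using assms(2) by simp
  also have "\<dots> = (\<Sum>j<k. B (Suc j) * g (Suc j))" using assms(1) by simp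
  also have "\<dots> = B 0 * g 0 + (\<Sum>j<k. B (Suc j) * g (Suc j))" using assms(3) by simp
  also have "\<dots> = (\<Sum>j<Suc k. B j * g j)" by (rule sum.lessThan_Suc_shift[symmetric])
  also have "\<dots> = (\<Sum>j\<le>k. B j * g j)" by (simp add: lessThan_Suc_atMost)
  finally show ?thesis .
qed

lemma absorb1: "(i - j) * (i choose j) = Suc j * (i choose Suc j)"
  using binomial_absorb_comp[of i j] binomial_absorption[of j i] by simp

lemma stein_point:
  fixes n i k j :: nat
  assumes "i \<le> n" "j < k"
  shows "(real i - real j) * (real k - real j) * (real (i choose j) * real ((n - i) choose (k - j)))
       = (real (Suc j) * (real n - real i - real k + real (Suc j)))
         * (real (i choose Suc j) * real ((n - i) choose (k - Suc j)))"
proof -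
  have A: "(real i - real j) * real (i choose j) = real (Suc j) * real (i choose Suc j)"
  proof (cases "j \<le> i")
    case True
    then show ?thesis using absorb1[of i j] by (metis of_nat_diff of_nat_mult)
  next
    case False
    then show ?thesis by (simp add: binomial_eq_0)
  qed
  define r where "r = k - Suc j"
  have kj: "k - j = Suc r" using assms r_def by simp
  have B: "(real k - real j) * real ((n - i) choose (k - j))
        = (real n - real i - real k + real (Suc j)) * real ((n - i) choose (k - Suc j))"
  proof (cases "r \<le> n - i")
    case True
    have "(n - i - r) * ((n - i) choose r) = Suc r * ((n - i) choose Suc r)" by (rule absorb1)
    hence e1: "real (Suc r) * real ((n - i) choose Suc r) = real (n - i - r) * real ((n - i) choose r)"
      by (metis of_nat_mult)
    have e2: "real (n - i - r) = real n - real i - real k + real (Suc j)"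
      using True assms r_def by (simp add: of_nat_diff)
    have e3: "real (Suc r) = real k - real j" using kj assms by (metis less_imp_le of_nat_diff)
    have "(real k - real j) * real ((n - i) choose (k - j)) = real (Suc r) * real ((n - i) choose Suc r)"
      using e3 kj by simp
    also have "\<dots> = (real n - real i - real k + real (Suc j)) * real ((n - i) choose (k - Suc j))"
      using e1 e2 r_def by simp
    finally show ?thesis .
  next
    case False
    then show ?thesis unfolding kj r_def[symmetric] by (simp add: binomial_eq_0)
  qed
  show ?thesis
  proof -
    have "(real i - real j) * (real k - real j) * (real (i choose j) * real ((n - i) choose (k - j)))
        = ((real i - real j) * real (i choose j)) * ((real k - real j) * real ((n - i) choose (k - j)))"
      by (simp add: algebra_simps)
    also have "\<dots> = (real (Suc j) * real (i choose Suc j)) *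
        ((real n - real i - real k + real (Suc j)) * real ((n - i) choose (k - Suc j)))"
      using A B by simp
    finally show ?thesis by (simp add: algebra_simps)
  qed
qed

lemma pmf_hyp:
  assumes "i \<le> n" "k \<le> n"
  shows "pmf (hyp_pmf n i k) j =
     (if j \<le> k then real ((i choose j) * ((n - i) choose (k - j))) / real (n choose k) else 0)"
proof -
  define SS where "SS = {S. S \<subseteq> {0..<n} \<and> card S = k}"
  have fin: "finite SS" unfolding SS_def
    by (rule finite_subset[of _ "Pow {0..<n}"]) auto
  have ne: "SS \<noteq> {}" unfolding SS_def using assms
    by (intro exI[of _ "{0..<k}"] notI) (auto simp: set_eq_iff dest!: spec[of _ "{0..<k}"])
  have cS: "card SS = n choose k" unfolding SS_def using n_subsets[of "{0..<n}" k] by simp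
  have "pmf (hyp_pmf n i k) j = card (SS \<inter> (\<lambda>S. card (S \<inter> {0..<i})) -` {j}) / card SS"
    unfolding hyp_pmf_def SS_def[symmetric] pmf_map using measure_pmf_of_set[OF ne fin] by simp
  also have "SS \<inter> (\<lambda>S. card (S \<inter> {0..<i})) -` {j} = {S. S \<subseteq> {0..<n} \<and> card S = k \<and> card (S \<inter> {0..<i}) = j}"
    unfolding SS_def by auto
  finally have eq: "pmf (hyp_pmf n i k) j = card {S. S \<subseteq> {0..<n} \<and> card S = k \<and> card (S \<inter> {0..<i}) = j} / (n choose k)"
    using cS by simp
  show ?thesis
  proof (cases "j \<le> k")
    case True
    have "card {S. S \<subseteq> {0..<n} \<and> card S = k \<and> card (S \<inter> {0..<i}) = j} = (i choose j) * ((n - i) choose (k - j))"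
      using count_subsets[of "{0..<n}" "{0..<i}" j k] True assms by simp
    then show ?thesis using eq True by simp
  next
    case False
    have "{S. S \<subseteq> {0..<n} \<and> card S = k \<and> card (S \<inter> {0..<i}) = j} = {}"
    proof (rule ccontr)
      assume "\<not> ?thesis"
      then obtain S where S: "S \<subseteq> {0..<n}" "card S = k" "card (S \<inter> {0..<i}) = j" by auto
      have "finite S" using S(1) finite_subset by blast
      hence "card (S \<inter> {0..<i}) \<le> card S" by (intro card_mono) auto
      thus False using S False by simp
    qed
    then show ?thesis using eq False by simp
  qed
qed


lemma main_abstract:
  fixes P :: "nat \<Rightarrow> real" and n i k :: nat
  assumes nn: "\<forall>j. 0 \<le> P j" and s1: "(\<Sum>j\<le>k. P j) = 1"
    and st: "\<forall>j<k. (real i - real j) * (real k - real j) * P j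
                = (real (Suc j) * (real n - real i - real k + real (Suc j))) * P (Suc j)"
    and Pi: "\<forall>j. i < j \<longrightarrow> P j = 0"
    and k1: "1 \<le> k" and kn: "k < n" and iN: "i \<le> n"
  defines "\<mu> \<equiv> \<Sum>j\<le>k. real j * P j"
  defines "m \<equiv> nat \<lceil>\<mu>\<rceil>"
  defines "q \<equiv> \<Sum>j\<le>k. (if m \<le> j then P j else 0)"
  shows "q > 0 \<and> (\<Sum>j\<le>k. (if m \<le> j then real j * P j else 0)) / q
     \<le> of_int \<lceil>\<mu>\<rceil> + sqrt ((\<Sum>j\<le>k. (real j - \<mu>)^2 * P j) * (real n - 1) / (real n - real k) + 1)"
proof -
  define a where "a j = (real i - real j) * (real k - real j)" for j
  define b where "b j = real j * (real n - real i - real k + real j)" for j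
  define A where "A j = a j * P j" for j
  define B where "B j = b j * P j" for j
  have SG: "(\<Sum>j\<le>k. A j * g (Suc j)) = (\<Sum>j\<le>k. B j * g j)" for g
    by (rule stein_sum) (use st in \<open>auto simp: A_def B_def a_def b_def\<close>)
  have SGd: "(\<Sum>j\<le>k. A j * g (Suc j) - B j * g j) = 0" for g
    using SG[of g] by (simp add: sum_subtractf)
  have n0: "real n > 0" using kn by simp
  have "(\<Sum>j\<le>k. A j * 1 - B j * 1) = (\<Sum>j\<le>k. real i * real k * P j - real n * (real j * P j))"
    by (rule sum.cong) (simp_all add: A_def B_def a_def b_def algebra_simps)
  also have "\<dots> = real i * real k - real n * \<mu>"
    by (simp add: sum_subtractf sum_distrib_left[symmetric] s1 \<mu>_def)
  finally have mu_eq: "real n * \<mu> = real i * real k" using SGd[of "\<lambda>_. 1"] by simp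
  hence mu_def2: "\<mu> = real i * real k / real n" using n0 by (simp add: field_simps)
  have mu0: "0 \<le> \<mu>" unfolding mu_def2 by simp
  have mui: "\<mu> \<le> real i" unfolding mu_def2 using kn n0
    by (simp add: divide_le_eq mult_left_mono)
  have "real i * real k \<le> real n * real k" using iN by (intro mult_right_mono) auto
  hence muk: "\<mu> \<le> real k" unfolding mu_def2 using n0
    by (simp add: divide_le_eq mult.commute)
  define E2 where "E2 = (\<Sum>j\<le>k. (real j)^2 * P j)"
  have "(\<Sum>j\<le>k. A j * real (Suc j) - B j * real j)
      = (\<Sum>j\<le>k. real i * real k * P j + (real i * real k - real i - real k) * (real j * P j)
                 + (1 - real n) * ((real j)^2 * P j))"
    by (rule sum.cong) (simp_all add: A_def B_def a_def b_def algebra_simps power2_eq_square)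
  also have "\<dots> = real i * real k + (real i * real k - real i - real k) * \<mu> + (1 - real n) * E2"
    by (simp add: sum.distrib sum_distrib_left[symmetric] s1 \<mu>_def E2_def)
  finally have E2eq: "real i * real k + (real i * real k - real i - real k) * \<mu> + (1 - real n) * E2 = 0"
    using SGd[of real] by simp
  define V where "V = (\<Sum>j\<le>k. (real j - \<mu>)^2 * P j)"
  have "V = (\<Sum>j\<le>k. (real j)^2 * P j - 2 * \<mu> * (real j * P j) + \<mu>^2 * P j)"
    unfolding V_def by (rule sum.cong) (simp_all add: algebra_simps power2_eq_square)
  also have "\<dots> = E2 - 2 * \<mu> * \<mu> + \<mu>^2"
    by (simp add: sum.distrib sum_subtractf sum_distrib_left[symmetric] s1 \<mu>_def E2_def)
  finally have VE: "V = E2 - \<mu>^2" by (simp add: power2_eq_square)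
  have Vn: "(real n - 1) * V = (real i - \<mu>) * (real k - \<mu>)"
  proof -
    have "(real n - 1) * V = (real n - 1) * E2 - (real n - 1) * \<mu>^2" unfolding VE by (simp add: algebra_simps)
    also have "(real n - 1) * E2 = real i * real k + (real i * real k - real i - real k) * \<mu>"
      using E2eq by (simp add: algebra_simps)
    finally have f1: "(real n - 1) * V = real i * real k + (real i * real k - real i - real k) * \<mu> - (real n - 1) * \<mu>^2" .
    have h: "real i * real k * \<mu> = real n * \<mu> * \<mu>" using mu_eq by simp
    have "real i * real k + (real i * real k - real i - real k) * \<mu> - (real n - 1) * \<mu>^2
        - (real i - \<mu>) * (real k - \<mu>) = real i * real k * \<mu> - real n * \<mu> * \<mu>"
      by (simp add: algebra_simps power2_eq_square)
    thus ?thesis using f1 h by linarith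
  qed
  have mR: "real m = of_int \<lceil>\<mu>\<rceil>" unfolding m_def using mu0 by simp
  have mge: "\<mu> \<le> real m" using mR by linarith
  have lt_m: "real j < \<mu>" if "j < m" for j
  proof -
    have "int j < \<lceil>\<mu>\<rceil>" using that mu0 unfolding m_def by linarith
    thus ?thesis by (simp add: less_ceiling_iff)
  qed
  define g3 where "g3 j = (if m \<le> j then real j - real m else 0)" for j
  have "(\<Sum>j\<le>k. A j * g3 (Suc j) - B j * g3 j)
     = (\<Sum>j\<le>k. if m \<le> j then (a j + (real i * real k - real n * real j) * (real j - real m)) * P j else 0)"
  proof (rule sum.cong)
    fix j assume "j \<in> {..k}"
    show "A j * g3 (Suc j) - B j * g3 j
       = (if m \<le> j then (a j + (real i * real k - real n * real j) * (real j - real m)) * P j else 0)"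
    proof (cases "m \<le> j")
      case True
      then show ?thesis by (simp add: A_def B_def g3_def a_def b_def algebra_simps)
    next
      case False
      hence "g3 (Suc j) = 0" unfolding g3_def by auto
      moreover have "g3 j = 0" unfolding g3_def using False by auto
      ultimately show ?thesis using False by simp
    qed
  qed simp
  hence T: "(\<Sum>j\<le>k. if m \<le> j then (a j + (real i * real k - real n * real j) * (real j - real m)) * P j else 0) = 0"
    using SGd[of g3] by simp
  define X where "X = (\<Sum>j\<le>k. if m \<le> j then (real j - real m) * P j else 0)"
  define Y where "Y = (\<Sum>j\<le>k. if m \<le> j then (real j - real m)^2 * P j else 0)"
  have "real n * Y = (\<Sum>j\<le>k. if m \<le> j then real n * ((real j - real m)^2 * P j) else 0)"
    unfolding Y_def sum_distrib_left by (rule sum.cong) auto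
  also have "\<dots> \<le> (\<Sum>j\<le>k. if m \<le> j then (real n * real j - real i * real k) * (real j - real m) * P j else 0)"
  proof (rule sum_mono)
    fix j assume "j \<in> {..k}"
    show "(if m \<le> j then real n * ((real j - real m)^2 * P j) else 0)
       \<le> (if m \<le> j then (real n * real j - real i * real k) * (real j - real m) * P j else 0)"
    proof (cases "m \<le> j")
      case True
      have d0: "0 \<le> real j - real m" using True by simp
      have "real n * \<mu> \<le> real n * real m" using mge n0 by (intro mult_left_mono) auto
      hence "real n * (real j - real m) \<le> real n * real j - real i * real k"
        using mu_eq by (simp add: algebra_simps)
      hence "real n * (real j - real m) * (real j - real m) \<le> (real n * real j - real i * real k) * (real j - real m)"
        using d0 by (rule mult_right_mono)
      hence "real n * (real j - real m) * (real j - real m) * P j \<le> (real n * real j - real i * real k) * (real j - real m) * P j"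
        using nn by (simp add: mult_right_mono)
      then show ?thesis using True by (simp add: power2_eq_square algebra_simps)
    qed simp
  qed
  also have "\<dots> = (\<Sum>j\<le>k. if m \<le> j then a j * P j else 0)"
  proof -
    have "(\<Sum>j\<le>k. if m \<le> j then (real n * real j - real i * real k) * (real j - real m) * P j else 0)
       - (\<Sum>j\<le>k. if m \<le> j then a j * P j else 0)
       = - (\<Sum>j\<le>k. if m \<le> j then (a j + (real i * real k - real n * real j) * (real j - real m)) * P j else 0)"
      unfolding sum_subtractf[symmetric] sum_negf[symmetric] by (rule sum.cong) (auto simp: algebra_simps)
    thus ?thesis using T by simp
  qed
  also have "\<dots> \<le> (\<Sum>j\<le>k. if m \<le> j then (real i - \<mu>) * (real k - \<mu>) * P j else 0)"
  proof (rule sum_mono)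
    fix j assume jk: "j \<in> {..k}"
    show "(if m \<le> j then a j * P j else 0) \<le> (if m \<le> j then (real i - \<mu>) * (real k - \<mu>) * P j else 0)"
    proof (cases "m \<le> j \<and> j \<le> i")
      case True
      have h1: "0 \<le> real i - real j" "real i - real j \<le> real i - \<mu>" using True mge by auto
      have h2: "0 \<le> real k - real j" "real k - real j \<le> real k - \<mu>" using True mge jk by auto
      have "a j \<le> (real i - \<mu>) * (real k - \<mu>)" unfolding a_def
        using h1 h2 by (intro mult_mono) auto
      then show ?thesis using True nn by (simp add: mult_right_mono)
    next
      case False
      then show ?thesis using Pi by auto
    qed
  qed
  also have "\<dots> = (real i - \<mu>) * (real k - \<mu>) * q"
    unfolding q_def sum_distrib_left by (rule sum.cong) auto
  finally have nY: "real n * Y \<le> (real i - \<mu>) * (real k - \<mu>) * q" .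
  have q0: "0 \<le> q" unfolding q_def using nn by (intro sum_nonneg) auto
  have qpos: "q > 0"
  proof (rule ccontr)
    assume "\<not> q > 0"
    hence "q = 0" using q0 by simp
    hence z: "\<forall>j\<in>{..k}. (if m \<le> j then P j else 0) = 0"
      unfolding q_def using nn by (subst sum_nonneg_eq_0_iff[symmetric]) auto
    have "(\<Sum>j\<le>k. (\<mu> - real j) * P j) = \<mu> * (\<Sum>j\<le>k. P j) - (\<Sum>j\<le>k. real j * P j)"
      by (simp add: algebra_simps sum_subtractf sum_distrib_left)
    hence "(\<Sum>j\<le>k. (\<mu> - real j) * P j) = 0" using s1 \<mu>_def by simp
    moreover have tn: "\<forall>j\<in>{..k}. 0 \<le> (\<mu> - real j) * P j"
    proof
      fix j assume "j \<in> {..k}"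
      show "0 \<le> (\<mu> - real j) * P j"
      proof (cases "m \<le> j")
        case True
        have "P j = 0" using z \<open>j \<in> {..k}\<close> True by (metis (mono_tags))
        thus ?thesis by simp
      next
        case False thus ?thesis using lt_m[of j] nn by simp
      qed
    qed
    ultimately have z2: "\<forall>j\<in>{..k}. (\<mu> - real j) * P j = 0"
      by (subst sum_nonneg_eq_0_iff[symmetric]) auto
    have "\<forall>j\<in>{..k}. P j = 0"
    proof
      fix j assume jk: "j \<in> {..k}"
      show "P j = 0"
      proof (cases "m \<le> j")
        case True thus ?thesis using z jk by (metis (mono_tags))
      next
        case False thus ?thesis using lt_m[of j] z2 jk by auto
      qed
    qed
    hence "(\<Sum>j\<le>k. P j) = 0" by simp
    thus False using s1 by simp
  qed
  have "0 \<le> (\<Sum>j\<le>k. if m \<le> j then P j * (q * (real j - real m) - X)^2 else 0)"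
    using nn by (intro sum_nonneg) auto
  also have "(\<Sum>j\<le>k. if m \<le> j then P j * (q * (real j - real m) - X)^2 else 0)
     = (\<Sum>j\<le>k. q^2 * (if m \<le> j then (real j - real m)^2 * P j else 0)
              - 2 * q * X * (if m \<le> j then (real j - real m) * P j else 0)
              + X^2 * (if m \<le> j then P j else 0))"
    by (rule sum.cong) (simp_all add: power2_eq_square algebra_simps)
  also have "\<dots> = q^2 * Y - 2 * q * X * X + X^2 * q"
    unfolding X_def Y_def q_def by (simp add: sum.distrib sum_subtractf sum_distrib_left)
  finally have "0 \<le> q * (q * Y - X^2)" by (simp add: power2_eq_square algebra_simps)
  hence CS: "X^2 \<le> q * Y" using qpos by (simp add: zero_le_mult_iff)
  have X0: "0 \<le> X" unfolding X_def using nn by (intro sum_nonneg) auto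
  have "(\<Sum>j\<le>k. (if m \<le> j then real j * P j else 0))
      = (\<Sum>j\<le>k. real m * (if m \<le> j then P j else 0) + (if m \<le> j then (real j - real m) * P j else 0))"
    by (rule sum.cong) (simp_all add: algebra_simps)
  also have "\<dots> = real m * q + X" unfolding q_def X_def by (simp add: sum.distrib sum_distrib_left)
  finally have num: "(\<Sum>j\<le>k. (if m \<le> j then real j * P j else 0)) / q = real m + X / q"
    using qpos by (simp add: field_simps)
  have "(X / q)^2 \<le> Y / q"
  proof -
    have "(X / q)^2 = X^2 / q^2" by (simp add: power_divide)
    also have "\<dots> \<le> (q * Y) / q^2" using CS qpos by (intro divide_right_mono) auto
    also have "\<dots> = Y / q" using qpos by (simp add: power2_eq_square)
    finally show ?thesis .
  qed
  moreover have "Y / q \<le> V * (real n - 1) / (real n - real k) + 1"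
  proof -
    have w0: "0 \<le> (real i - \<mu>) * (real k - \<mu>)" using mui muk by simp
    have "Y / q \<le> (real i - \<mu>) * (real k - \<mu>) / real n"
      using nY qpos n0 by (simp add: divide_le_eq le_divide_eq mult.commute)
    also have "\<dots> \<le> (real i - \<mu>) * (real k - \<mu>) / (real n - real k)"
      using w0 k1 kn by (intro divide_left_mono) auto
    also have "\<dots> = V * (real n - 1) / (real n - real k)" using Vn by (simp add: mult.commute)
    finally show ?thesis by simp
  qed
  ultimately have "(X / q)^2 \<le> V * (real n - 1) / (real n - real k) + 1" by linarith
  hence "X / q \<le> sqrt (V * (real n - 1) / (real n - real k) + 1)" by (rule real_le_rsqrt)
  thus ?thesis using num qpos mR unfolding V_def by simp
qed


theorem theorem5:
  fixes n i k :: nat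
  assumes "0 < n" and "1 \<le> i" and "i \<le> n" and "1 \<le> k" and "k < n"
  shows "hyp_upper_cond_mean n i k
           \<le> of_int \<lceil>hyp_mean n i k\<rceil>
              + sqrt (hyp_var n i k * (real n - 1) / (real n - real k) + 1)"
proof -
  define p where "p = hyp_pmf n i k"
  define P where "P j = pmf p j" for j
  have kn: "k \<le> n" using assms by simp
  have Pf: "P j = (if j \<le> k then real ((i choose j) * ((n - i) choose (k - j))) / real (n choose k) else 0)" for j
    unfolding P_def p_def using pmf_hyp[OF assms(3) kn] by simp
  have nn: "\<forall>j. 0 \<le> P j" unfolding P_def by simp
  have sp: "set_pmf p \<subseteq> {..k}"
  proof
    fix j assume "j \<in> set_pmf p"
    hence "P j \<noteq> 0" unfolding P_def by (simp add: set_pmf_iff)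
    thus "j \<in> {..k}" using Pf[of j] by (auto split: if_splits)
  qed
  have s1: "(\<Sum>j\<le>k. P j) = 1" unfolding P_def by (rule sum_pmf_eq_1) (use sp in auto)
  have st: "\<forall>j<k. (real i - real j) * (real k - real j) * P j
                = (real (Suc j) * (real n - real i - real k + real (Suc j))) * P (Suc j)"
  proof (intro allI impI)
    fix j assume jk: "j < k"
    have "(real i - real j) * (real k - real j) * (real (i choose j) * real ((n - i) choose (k - j))) / real (n choose k)
       = (real (Suc j) * (real n - real i - real k + real (Suc j)))
         * (real (i choose Suc j) * real ((n - i) choose (k - Suc j))) / real (n choose k)"
      using stein_point[OF assms(3) jk] by simp
    thus "(real i - real j) * (real k - real j) * P j
                = (real (Suc j) * (real n - real i - real k + real (Suc j))) * P (Suc j)"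
      using jk Pf[of j] Pf[of "Suc j"] by simp
  qed
  have Pi: "\<forall>j. i < j \<longrightarrow> P j = 0" using Pf by (simp add: binomial_eq_0)
  define \<mu> where "\<mu> = (\<Sum>j\<le>k. real j * P j)"
  define m where "m = nat \<lceil>\<mu>\<rceil>"
  define q where "q = (\<Sum>j\<le>k. (if m \<le> j then P j else 0))"
  have MA: "q > 0 \<and> (\<Sum>j\<le>k. (if m \<le> j then real j * P j else 0)) / q
     \<le> of_int \<lceil>\<mu>\<rceil> + sqrt ((\<Sum>j\<le>k. (real j - \<mu>)^2 * P j) * (real n - 1) / (real n - real k) + 1)"
    unfolding q_def m_def \<mu>_def
    by (rule main_abstract[OF nn s1 st Pi assms(4) assms(5) assms(3)])
  have mean: "hyp_mean n i k = \<mu>"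
    unfolding hyp_mean_def p_def[symmetric] \<mu>_def P_def
    by (subst integral_measure_pmf_real[where A="{..k}"]) (use sp in auto)
  have var: "hyp_var n i k = (\<Sum>j\<le>k. (real j - \<mu>)^2 * P j)"
    unfolding hyp_var_def p_def[symmetric] hyp_mean_def[symmetric, of n i k, unfolded p_def[symmetric]] mean P_def
    by (subst integral_measure_pmf_real[where A="{..k}"]) (use sp in auto)
  define A where "A = {j. real j \<ge> hyp_mean n i k}"
  have mu0: "0 \<le> \<mu>" unfolding \<mu>_def using nn by (intro sum_nonneg) auto
  have inA: "j \<in> A \<longleftrightarrow> m \<le> j" for j
  proof -
    have "j \<in> A \<longleftrightarrow> \<mu> \<le> real j" unfolding A_def mean by simp
    also have "\<dots> \<longleftrightarrow> \<lceil>\<mu>\<rceil> \<le> int j" by (simp add: ceiling_le_iff)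
    also have "\<dots> \<longleftrightarrow> m \<le> j" unfolding m_def using mu0 by linarith
    finally show ?thesis .
  qed
  have qpos: "q > 0" using MA by simp
  have "\<exists>j\<le>k. m \<le> j \<and> P j \<noteq> 0"
  proof (rule ccontr)
    assume "\<not> ?thesis"
    hence "q = 0" unfolding q_def by (intro sum.neutral) auto
    thus False using qpos by simp
  qed
  then obtain j0 where j0: "m \<le> j0" "P j0 \<noteq> 0" by auto
  have ne: "set_pmf p \<inter> A \<noteq> {}"
    using j0 inA[of j0] unfolding P_def by (auto simp: set_pmf_iff)
  have measA: "measure (measure_pmf p) A = q"
  proof -
    have "measure (measure_pmf p) A = measure (measure_pmf p) (A \<inter> set_pmf p)"
      by (simp add: measure_Int_set_pmf)
    also have "A \<inter> set_pmf p = (A \<inter> {..k}) \<inter> set_pmf p" using sp by blast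
    also have "measure (measure_pmf p) \<dots> = measure (measure_pmf p) (A \<inter> {..k})"
      by (simp add: measure_Int_set_pmf)
    also have "\<dots> = sum P (A \<inter> {..k})" unfolding P_def by (simp add: measure_measure_pmf_finite)
    also have "A \<inter> {..k} = {j \<in> {..k}. m \<le> j}" using inA by blast
    also have "sum P \<dots> = q" unfolding q_def by (rule sum.inter_filter) simp
    finally show ?thesis .
  qed
  have cm: "hyp_upper_cond_mean n i k = (\<Sum>j\<le>k. (if m \<le> j then real j * P j else 0)) / q"
  proof -
    have "hyp_upper_cond_mean n i k = measure_pmf.expectation (cond_pmf p A) real"
      unfolding hyp_upper_cond_mean_def p_def A_def by simp
    also have "\<dots> = (\<Sum>j\<le>k. real j * pmf (cond_pmf p A) j)"
      by (subst integral_measure_pmf_real[where A="{..k}"]) (use sp ne in auto)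
    also have "\<dots> = (\<Sum>j\<le>k. (if m \<le> j then real j * P j else 0) / q)"
      by (rule sum.cong) (auto simp: pmf_cond[OF ne] measA inA P_def)
    also have "\<dots> = (\<Sum>j\<le>k. (if m \<le> j then real j * P j else 0)) / q"
      by (simp add: sum_divide_distrib)
    finally show ?thesis .
  qed
  show ?thesis using MA unfolding cm mean var by simp
qed

end
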